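(* For every integer $N\ge 0$, let $T_{1\times 3}(5,N)$ be the number of tilings of a $5\times n$ rectangle, $n=3N/5$, by $N$ tiles of size $1\times 3$ (and $0$ if $3N/5\notin\mathbb{Z}$). Then, as formal power series, \[ \sum_{N\ge 0} T_{1\times 3}(5,N)\,z^N=\frac{(1-z^5)^2}{1-6z^5+3z^{10}-z^{15}}. \]
   Context: A tiling of an $m\times n$ rectangle (width $m$, length $n$, made of $mn$ unit squares) by $a\times b$ tiles is a partition of the rectangle into non-overlapping axis-parallel $a\times b$ rectangles with integer corner coordinates, each placed in either of its two orientations. Tilings related by reflections or rotations of the rectangle are counted as distinct. The empty tiling counts once for $N=0$. *)

theory Defs
  imports "HOL-Computational_Algebra.Formal_Power_Series"
begin

text \<open>Unit squares are indexed by their lower-left corner (x,y) in nat x nat.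
  The m x n rectangle (width m, length n) is the set of cells [0,m) x [0,n).\<close>

definition rect :: "nat \<Rightarrow> nat \<Rightarrow> (nat \<times> nat) set" where
  "rect m n = {0..<m} \<times> {0..<n}"

definition block :: "nat \<Rightarrow> nat \<Rightarrow> nat \<Rightarrow> nat \<Rightarrow> (nat \<times> nat) set" where
  "block x y p q = {x..<x+p} \<times> {y..<y+q}"

definition is_tile :: "nat \<Rightarrow> nat \<Rightarrow> (nat \<times> nat) set \<Rightarrow> bool" where
  "is_tile a b S \<longleftrightarrow> (\<exists>x y. S = block x y a b \<or> S = block x y b a)"

definition is_tiling :: "nat \<Rightarrow> nat \<Rightarrow> nat \<Rightarrow> nat \<Rightarrow> (nat \<times> nat) set set \<Rightarrow> bool" where
  "is_tiling m n a b \<T> \<longleftrightarrow>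
     (\<forall>S\<in>\<T>. is_tile a b S) \<and>
     (\<forall>S\<in>\<T>. \<forall>S'\<in>\<T>. S \<noteq> S' \<longrightarrow> S \<inter> S' = {}) \<and>
     \<Union>\<T> = rect m n"

definition num_tilings :: "nat \<Rightarrow> nat \<Rightarrow> nat \<Rightarrow> nat \<Rightarrow> nat" where
  "num_tilings m n a b = card {\<T>. is_tiling m n a b \<T>}"

definition T13_5 :: "nat \<Rightarrow> nat" where
  "T13_5 N = (if 5 dvd (3 * N) then card {\<T>. is_tiling 5 (3 * N div 5) 1 3 \<T> \<and> card \<T> = N} else 0)"

end

theory Submission
  imports Defs
begin
definition tiling :: "(nat \<times> nat) set \<Rightarrow> (nat \<times> nat) set set \<Rightarrow> bool" where
  "tiling S T \<longleftrightarrow> (\<forall>t\<in>T. is_tile 1 3 t) \<and> (\<forall>t\<in>T. \<forall>t'\<in>T. t \<noteq> t' \<longrightarrow> t \<inter> t' = {}) \<and> \<Union>T = S"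
lemma tile_ne: "is_tile 1 3 t \<Longrightarrow> t \<noteq> {}"
proof -
  assume "is_tile 1 3 t"
  then obtain x y where "t = block x y 1 3 \<or> t = block x y 3 1" unfolding is_tile_def by blast
  then have "(x,y) \<in> t" unfolding block_def by auto
  thus ?thesis by blast
qed

lemma tiling_insert: "tiling (S - t) T \<Longrightarrow> t \<subseteq> S \<Longrightarrow> is_tile 1 3 t \<Longrightarrow> tiling S (insert t T) \<and> t \<notin> T"
proof -
  assume a: "tiling (S - t) T" "t \<subseteq> S" "is_tile 1 3 t"
  have sub: "t' \<subseteq> S - t" if "t' \<in> T" for t' using a(1) that unfolding tiling_def by blast
  have "t \<notin> T"
  proof
    assume "t \<in> T"
    then have "t \<subseteq> S - t" by (rule sub)
    then have "t = {}" by blast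
    with tile_ne[OF a(3)] show False by simp
  qed
  moreover have "tiling S (insert t T)"
    unfolding tiling_def
  proof (intro conjI)
    show "\<forall>t\<in>insert t T. is_tile 1 3 t" using a unfolding tiling_def by simp
    show "\<forall>ta\<in>insert t T. \<forall>t'\<in>insert t T. ta \<noteq> t' \<longrightarrow> ta \<inter> t' = {}"
    proof (intro ballI impI)
      fix u v assume uv: "u \<in> insert t T" "v \<in> insert t T" "u \<noteq> v"
      show "u \<inter> v = {}"
      proof (cases "u = t")
        case True then have "v \<in> T" using uv by auto
        then show ?thesis using sub True by blast
      next
        case False then have u: "u \<in> T" using uv by auto
        show ?thesis
        proof (cases "v = t")
          case True then show ?thesis using sub u by blast
        next
          case False then have "v \<in> T" using uv by auto
          then show ?thesis using u uv(3) a(1) unfolding tiling_def by blast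
        qed
      qed
    qed
    have "\<Union>T = S - t" using a(1) unfolding tiling_def by blast
    then show "\<Union>(insert t T) = S" using a(2) by auto
  qed
  ultimately show ?thesis by simp
qed

definition NT :: "(nat \<times> nat) set \<Rightarrow> nat" where
  "NT S = card {T. tiling S T}"

lemma tile_card: "is_tile 1 3 t \<Longrightarrow> card t = 3"
proof -
  assume "is_tile 1 3 t"
  then obtain x y where "t = block x y 1 3 \<or> t = block x y 3 1" unfolding is_tile_def by blast
  then show ?thesis unfolding block_def by (auto simp: card_cartesian_product)
qed

lemma NT_empty: "NT {} = 1"
proof -
  have "T = {}" if "tiling {} T" for T
  proof (rule ccontr)
    assume "T \<noteq> {}"
    then obtain t where t: "t \<in> T" by blast
    then have "t = {}" "is_tile 1 3 t" using that unfolding tiling_def by auto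
    then show False using tile_ne by blast
  qed
  moreover have "tiling {} {}" unfolding tiling_def by simp
  ultimately have "{T. tiling {} T} = {{}}" by blast
  thus ?thesis by (simp add: NT_def)
qed

lemma tiling_remove: "tiling S T \<Longrightarrow> t \<in> T \<Longrightarrow> tiling (S - t) (T - {t})"
  unfolding tiling_def by blast

lemma card_with_tile:
  assumes "is_tile 1 3 t"
  shows "card {T. tiling S T \<and> t \<in> T} = (if t \<subseteq> S then NT (S - t) else 0)"
proof (cases "t \<subseteq> S")
  case False
  have "{T. tiling S T \<and> t \<in> T} = {}"
    using False unfolding tiling_def by blast
  thus ?thesis using False by (metis card.empty)
next
  case True
  have "bij_betw (\<lambda>T. T - {t}) {T. tiling S T \<and> t \<in> T} {T. tiling (S - t) T}"
  proof (rule bij_betw_byWitness[where f' = "insert t"])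
    show "\<forall>a\<in>{T. tiling S T \<and> t \<in> T}. insert t (a - {t}) = a" by blast
    show "\<forall>a'\<in>{T. tiling (S - t) T}. insert t a' - {t} = a'"
      using tiling_insert[OF _ True assms] by blast
    show "(\<lambda>T. T - {t}) ` {T. tiling S T \<and> t \<in> T} \<subseteq> {T. tiling (S - t) T}"
      using tiling_remove by blast
    show "insert t ` {T. tiling (S - t) T} \<subseteq> {T. tiling S T \<and> t \<in> T}"
      using tiling_insert[OF _ True assms] by blast
  qed
  then have "card {T. tiling S T \<and> t \<in> T} = card {T. tiling (S - t) T}"
    by (rule bij_betw_same_card)
  thus ?thesis using True by (simp add: NT_def)
qed

lemma finite_tilings: "finite S \<Longrightarrow> finite {T. tiling S T}"
proof -
  assume "finite S"
  have "{T. tiling S T} \<subseteq> Pow (Pow S)" unfolding tiling_def by blast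
  thus ?thesis using \<open>finite S\<close> by (meson finite_Pow_iff finite_subset)
qed

lemma step_gen:
  assumes fin: "finite S" and c: "(cx,cy) \<in> S"
    and minc: "\<And>x y. (x,y) \<in> S \<Longrightarrow> cy < y \<or> (cy = y \<and> cx \<le> x)"
  shows "NT S = (if block cx cy 1 3 \<subseteq> S then NT (S - block cx cy 1 3) else 0)
              + (if block cx cy 3 1 \<subseteq> S then NT (S - block cx cy 3 1) else 0)"
proof -
  define t1 where "t1 = block cx cy 1 3"
  define t2 where "t2 = block cx cy 3 1"
  have tt1: "is_tile 1 3 t1" unfolding t1_def is_tile_def by blast
  have tt2: "is_tile 1 3 t2" unfolding t2_def is_tile_def by blast
  have key: "t1 \<in> T \<or> t2 \<in> T" if tT: "tiling S T" for T
  proof -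
    have U: "\<Union>T = S" and tl: "\<And>t. t \<in> T \<Longrightarrow> is_tile 1 3 t" using tT unfolding tiling_def by auto
    have "(cx,cy) \<in> \<Union>T" using U c by simp
    then obtain t where t: "t \<in> T" "(cx,cy) \<in> t" by (rule UnionE)
    have tS: "t \<subseteq> S" using t(1) U by blast
    from tl[OF t(1)] obtain x y where "t = block x y 1 3 \<or> t = block x y 3 1"
      unfolding is_tile_def by blast
    then show ?thesis
    proof
      assume h: "t = block x y 1 3"
      have "(x,y) \<in> t" using h by (simp add: block_def)
      then have "cy < y \<or> (cy = y \<and> cx \<le> x)" using minc tS by blast
      moreover have "x = cx" "y \<le> cy" using t(2) h by (auto simp: block_def)
      ultimately have "t = t1" using h by (simp add: t1_def)
      then show ?thesis using t by simp
    next
      assume h: "t = block x y 3 1"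
      have "(x,y) \<in> t" using h by (simp add: block_def)
      then have "cy < y \<or> (cy = y \<and> cx \<le> x)" using minc tS by blast
      moreover have "y = cy" "x \<le> cx" using t(2) h by (auto simp: block_def)
      ultimately have "t = t2" using h by (simp add: t2_def)
      then show ?thesis using t by simp
    qed
  qed
  have ne1: "(cx, Suc cy) \<in> t1" "(cx, Suc cy) \<notin> t2" unfolding t1_def t2_def block_def by auto
  have ne2: "(cx,cy) \<in> t1" "(cx,cy) \<in> t2" unfolding t1_def t2_def block_def by auto
  have disj: "\<not> (t1 \<in> T \<and> t2 \<in> T)" if "tiling S T" for T
  proof
    assume "t1 \<in> T \<and> t2 \<in> T"
    moreover have "t1 \<noteq> t2" using ne1 by blast
    ultimately have "t1 \<inter> t2 = {}" using that unfolding tiling_def by blast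
    then show False using ne2 by blast
  qed
  have eq: "{T. tiling S T} = {T. tiling S T \<and> t1 \<in> T} \<union> {T. tiling S T \<and> t2 \<in> T}"
    using key by blast
  have f: "finite {T. tiling S T}" using finite_tilings[OF fin] .
  have "card {T. tiling S T} = card {T. tiling S T \<and> t1 \<in> T} + card {T. tiling S T \<and> t2 \<in> T}"
    unfolding eq
  proof (rule card_Un_disjoint)
    show "finite {T. tiling S T \<and> t1 \<in> T}" using f by (rule rev_finite_subset) blast
    show "finite {T. tiling S T \<and> t2 \<in> T}" using f by (rule rev_finite_subset) blast
    show "{T. tiling S T \<and> t1 \<in> T} \<inter> {T. tiling S T \<and> t2 \<in> T} = {}" using disj by blast
  qed
  thus ?thesis
    unfolding NT_def[of S] using card_with_tile[OF tt1, of S] card_with_tile[OF tt2, of S]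
    by (simp add: t1_def t2_def)
qed

definition sh :: "nat \<times> nat \<Rightarrow> nat \<times> nat" where "sh p = (fst p, Suc (snd p))"
definition unsh :: "nat \<times> nat \<Rightarrow> nat \<times> nat" where "unsh p = (fst p, snd p - 1)"

lemma inj_sh: "inj sh" unfolding inj_on_def sh_def by (auto simp: prod_eq_iff)

lemma sh_block: "sh ` block x y p q = block x (Suc y) p q"
proof
  show "sh ` block x y p q \<subseteq> block x (Suc y) p q" by (auto simp: sh_def block_def)
  show "block x (Suc y) p q \<subseteq> sh ` block x y p q"
  proof
    fix z assume "z \<in> block x (Suc y) p q"
    then have "unsh z \<in> block x y p q" "z = sh (unsh z)"
      by (auto simp: sh_def unsh_def block_def prod_eq_iff)
    then show "z \<in> sh ` block x y p q" by blast
  qed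
qed

lemma unsh_sh[simp]: "unsh (sh p) = p" by (simp add: sh_def unsh_def)

lemma sh_unsh_img: "A \<subseteq> sh ` B \<Longrightarrow> sh ` unsh ` A = A"
  by (force simp: image_iff)

lemma tile_sh: "is_tile 1 3 t \<Longrightarrow> is_tile 1 3 (sh ` t)"
  unfolding is_tile_def using sh_block by metis

lemma tile_unsh: "is_tile 1 3 t \<Longrightarrow> t \<subseteq> sh ` S \<Longrightarrow> is_tile 1 3 (unsh ` t)"
proof -
  assume a: "is_tile 1 3 t" "t \<subseteq> sh ` S"
  then obtain x y where xy: "t = block x y 1 3 \<or> t = block x y 3 1" unfolding is_tile_def by blast
  then have "(x,y) \<in> t" by (auto simp: block_def)
  then have "y \<ge> 1" using a(2) by (auto simp: sh_def)
  then obtain y' where y: "y = Suc y'" by (cases y) auto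
  have "unsh ` sh ` block x y' p q = block x y' p q" for p q
    by (simp add: image_image)
  then show ?thesis using xy unfolding y sh_block[symmetric] is_tile_def by metis
qed

lemma tiling_sh: "tiling S T \<Longrightarrow> tiling (sh ` S) ((`) sh ` T)"
  unfolding tiling_def
  apply (intro conjI)
  using tile_sh apply blast
  apply (auto simp: image_Int[OF inj_sh, symmetric] inj_image_eq_iff[OF inj_sh])
  done

lemma tiling_unsh:
  assumes "tiling (sh ` S) T"
  shows "tiling S ((`) unsh ` T) \<and> (`) sh ` (`) unsh ` T = T"
proof -
  have sub: "t \<subseteq> sh ` S" if "t \<in> T" for t using assms that unfolding tiling_def by blast
  have ii: "inj_on unsh (sh ` UNIV)" unfolding inj_on_def by auto
  have img: "(`) sh ` (`) unsh ` T = T"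
  proof -
    have "(`) sh ` (`) unsh ` T = (\<lambda>t. sh ` unsh ` t) ` T" by (rule image_image)
    also have "\<dots> = T"
    proof
      have pt: "sh ` unsh ` t = t" if "t \<in> T" for t using sh_unsh_img[OF sub[OF that]] .
      show "(\<lambda>t. sh ` unsh ` t) ` T \<subseteq> T"
      proof
        fix u assume "u \<in> (\<lambda>t. sh ` unsh ` t) ` T"
        then obtain t where "t \<in> T" "u = sh ` unsh ` t" by blast
        then show "u \<in> T" using pt by simp
      qed
      show "T \<subseteq> (\<lambda>t. sh ` unsh ` t) ` T"
      proof
        fix t assume "t \<in> T" then show "t \<in> (\<lambda>t. sh ` unsh ` t) ` T" using pt[of t] by (metis image_eqI)
      qed
    qed
    finally show ?thesis .
  qed
  have t1: "\<forall>t\<in>(`) unsh ` T. is_tile 1 3 t"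
  proof
    fix u assume "u \<in> (`) unsh ` T"
    then obtain a where a: "a \<in> T" "u = unsh ` a" by blast
    have "is_tile 1 3 a" using assms a(1) by (simp add: tiling_def)
    then have "is_tile 1 3 (unsh ` a)" by (rule tile_unsh) (rule sub[OF a(1)])
    then show "is_tile 1 3 u" unfolding a(2) .
  qed
  have t2: "\<forall>u\<in>(`) unsh ` T. \<forall>v\<in>(`) unsh ` T. u \<noteq> v \<longrightarrow> u \<inter> v = {}"
  proof (intro ballI impI)
    fix u v assume uv: "u \<in> (`) unsh ` T" "v \<in> (`) unsh ` T" "u \<noteq> v"
    then obtain a b where ab: "a \<in> T" "b \<in> T" "u = unsh ` a" "v = unsh ` b" by blast
    then have "a \<noteq> b" using uv(3) by blast
    then have "a \<inter> b = {}" using assms ab(1,2) unfolding tiling_def by blast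
    moreover have "a \<subseteq> sh ` UNIV" "b \<subseteq> sh ` UNIV" using sub ab(1,2) by blast+
    ultimately have "unsh ` a \<inter> unsh ` b = {}" using inj_on_image_Int[OF ii] by (metis image_empty)
    then show "u \<inter> v = {}" using ab by simp
  qed
  have t3: "\<Union>((`) unsh ` T) = S"
  proof -
    have "\<Union>((`) unsh ` T) = unsh ` \<Union>T" by (rule image_Union[symmetric])
    also have "\<Union>T = sh ` S" using assms unfolding tiling_def by blast
    finally show ?thesis by (simp add: image_image)
  qed
  show ?thesis using img t1 t2 t3 unfolding tiling_def by simp
qed

lemma NT_shift: "NT (sh ` S) = NT S"
proof -
  have i1: "inj ((`) sh)" using inj_on_image[of sh UNIV] inj_sh by simp
  have i2: "inj ((`) ((`) sh))" using inj_on_image[of "(`) sh" UNIV] i1 by simp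
  have im: "(`) ((`) sh) ` {T. tiling S T} = {T. tiling (sh ` S) T}"
  proof
    show "(`) ((`) sh) ` {T. tiling S T} \<subseteq> {T. tiling (sh ` S) T}"
    proof
      fix x assume "x \<in> (`) ((`) sh) ` {T. tiling S T}"
      then obtain T where "tiling S T" "x = (`) sh ` T" by blast
      then show "x \<in> {T. tiling (sh ` S) T}" using tiling_sh by simp
    qed
    show "{T. tiling (sh ` S) T} \<subseteq> (`) ((`) sh) ` {T. tiling S T}"
    proof
      fix T assume "T \<in> {T. tiling (sh ` S) T}"
      then have "tiling S ((`) unsh ` T) \<and> (`) sh ` (`) unsh ` T = T" using tiling_unsh by simp
      then show "T \<in> (`) ((`) sh) ` {T. tiling S T}" by (metis (no_types, lifting) image_eqI mem_Collect_eq)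
    qed
  qed
  have "bij_betw ((`) ((`) sh)) {T. tiling S T} {T. tiling (sh ` S) T}"
    unfolding bij_betw_def using inj_on_subset[OF i2 subset_UNIV] im by blast
  then show ?thesis unfolding NT_def by (rule bij_betw_same_card[symmetric])
qed


definition R :: "nat list \<Rightarrow> nat \<Rightarrow> (nat \<times> nat) set" where
  "R h n = {(x,y). x < length h \<and> h!x \<le> y \<and> y < n}"

definition fz :: "nat list \<Rightarrow> nat" where
  "fz h = length (takeWhile (\<lambda>v. v \<noteq> 0) h)"

lemma finite_R: "finite (R h n)"
proof -
  have "R h n \<subseteq> {..<length h} \<times> {..<n}" by (auto simp: R_def)
  thus ?thesis by (rule finite_subset) auto
qed

lemma R_shift: "NT (R (map Suc h) (Suc n)) = NT (R h n)"
proof -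
  have "R (map Suc h) (Suc n) = sh ` R h n"
  proof
    show "sh ` R h n \<subseteq> R (map Suc h) (Suc n)" by (auto simp: R_def sh_def)
    show "R (map Suc h) (Suc n) \<subseteq> sh ` R h n"
    proof
      fix p assume p: "p \<in> R (map Suc h) (Suc n)"
      then have "unsh p \<in> R h n" "p = sh (unsh p)"
        by (auto simp: R_def sh_def unsh_def prod_eq_iff)
      then show "p \<in> sh ` R h n" by blast
    qed
  qed
  thus ?thesis by (simp add: NT_shift)
qed

lemma fz_nth: "fz h < length h \<Longrightarrow> h ! fz h = 0"
  unfolding fz_def using nth_length_takeWhile by fastforce

lemma fz_before: "x < fz h \<Longrightarrow> h ! x \<noteq> 0"
  unfolding fz_def by (metis (mono_tags, lifting) nth_mem set_takeWhileD takeWhile_nth)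

lemma zstep:
  assumes fzl: "fz h < length h" and N: "0 < N"
  shows "NT (R h N) = (if 3 \<le> N then NT (R (h[fz h := 3]) N) else 0)
     + (if fz h + 2 < length h \<and> h!(fz h+1) = 0 \<and> h!(fz h+2) = 0
        then NT (R (h[fz h := 1, fz h+1 := 1, fz h+2 := 1]) N) else 0)"
proof -
  define x0 where "x0 = fz h"
  have h0: "h ! x0 = 0" using fz_nth[OF fzl] by (simp add: x0_def)
  have bef: "x < x0 \<Longrightarrow> h ! x \<noteq> 0" for x using fz_before by (simp add: x0_def)
  have xl: "x0 < length h" using fzl by (simp add: x0_def)
  have c: "(x0, 0) \<in> R h N" using h0 xl N by (simp add: R_def)
  have minc: "0 < y \<or> (0 = y \<and> x0 \<le> x)" if "(x,y) \<in> R h N" for x y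
    using that bef[of x] by (cases "y = 0") (auto simp: R_def not_less[symmetric])
  have s1: "block x0 0 1 3 \<subseteq> R h N \<longleftrightarrow> 3 \<le> N"
  proof
    assume "block x0 0 1 3 \<subseteq> R h N"
    moreover have "(x0, 2) \<in> block x0 0 1 3" by (simp add: block_def)
    ultimately show "3 \<le> N" by (auto simp: R_def)
  next
    assume "3 \<le> N" then show "block x0 0 1 3 \<subseteq> R h N"
      using xl h0 by (auto simp: block_def R_def)
  qed
  have d1: "R h N - block x0 0 1 3 = R (h[x0 := 3]) N"
    using xl h0 by (auto simp: block_def R_def nth_list_update split: if_splits)
  have s2: "block x0 0 3 1 \<subseteq> R h N \<longleftrightarrow> (x0 + 2 < length h \<and> h!(x0+1) = 0 \<and> h!(x0+2) = 0)"
  proof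
    assume a: "block x0 0 3 1 \<subseteq> R h N"
    have "(x0+2, 0) \<in> block x0 0 3 1" "(x0+1, 0) \<in> block x0 0 3 1" by (auto simp: block_def)
    then show "x0 + 2 < length h \<and> h!(x0+1) = 0 \<and> h!(x0+2) = 0" using a by (auto simp: R_def)
  next
    assume a: "x0 + 2 < length h \<and> h!(x0+1) = 0 \<and> h!(x0+2) = 0"
    show "block x0 0 3 1 \<subseteq> R h N"
    proof
      fix p assume "p \<in> block x0 0 3 1"
      then obtain i where "p = (x0 + i, 0)" "i < 3" by (auto simp: block_def) (metis add_diff_inverse_nat less_diff_conv2 not_less)
      then show "p \<in> R h N" using a h0 N by (auto simp: R_def less_Suc_eq numeral_3_eq_3)
    qed
  qed
  have d2: "R h N - block x0 0 3 1 = R (h[x0 := 1, x0+1 := 1, x0+2 := 1]) N"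
    if "x0 + 2 < length h \<and> h!(x0+1) = 0 \<and> h!(x0+2) = 0"
    using that h0 by (auto simp: block_def R_def nth_list_update split: if_splits)
  show ?thesis
    using step_gen[OF finite_R c minc] s1 d1 s2 d2 unfolding x0_def by simp
qed


lemma R0: "NT (R h 0) = 1"
  by (simp add: R_def NT_empty)

lemma R_shift2: "h' = map Suc h \<Longrightarrow> N' = Suc N \<Longrightarrow> NT (R h' N') = NT (R h N)"
  using R_shift by simp

lemma rZ: "NT (R [0,0,0,0,0] (n+3)) = NT (R [0,0,0,0,0] n) + NT (R [2,2,0,0,0] (n+2)) + NT (R [2,0,0,0,2] (n+2)) + NT (R [0,0,0,2,2] (n+2))"
proof -
  have h0: "NT (R [0,0,0,0,0] (n+3)) = NT (R [3,3,3,3,3] (n+3)) + NT (R [3,3,1,1,1] (n+3)) + NT (R [3,1,1,1,3] (n+3)) + NT (R [1,1,1,3,3] (n+3))" by (simp add: zstep fz_def)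
  have h1: "NT (R [3,3,3,3,3] (n+3)) = NT (R [2,2,2,2,2] (n+2))" by (rule R_shift2) simp_all
  have h2: "NT (R [3,3,1,1,1] (n+3)) = NT (R [2,2,0,0,0] (n+2))" by (rule R_shift2) simp_all
  have h3: "NT (R [3,1,1,1,3] (n+3)) = NT (R [2,0,0,0,2] (n+2))" by (rule R_shift2) simp_all
  have h4: "NT (R [1,1,1,3,3] (n+3)) = NT (R [0,0,0,2,2] (n+2))" by (rule R_shift2) simp_all
  have h5: "NT (R [2,2,2,2,2] (n+2)) = NT (R [1,1,1,1,1] (n+1))" by (rule R_shift2) simp_all
  have h6: "NT (R [1,1,1,1,1] (n+1)) = NT (R [0,0,0,0,0] n)" by (rule R_shift2) simp_all
  show ?thesis using h0 h1 h2 h3 h4 h5 h6 by simp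
qed

lemma rQ: "NT (R [2,2,0,0,0] (n+5)) = NT (R [2,2,0,0,0] (n+2)) + NT (R [1,1,0,0,0] (n+4))"
proof -
  have h0: "NT (R [2,2,0,0,0] (n+5)) = NT (R [2,2,3,3,3] (n+5)) + NT (R [2,2,1,1,1] (n+5))" by (simp add: zstep fz_def)
  have h1: "NT (R [2,2,3,3,3] (n+5)) = NT (R [1,1,2,2,2] (n+4))" by (rule R_shift2) simp_all
  have h2: "NT (R [2,2,1,1,1] (n+5)) = NT (R [1,1,0,0,0] (n+4))" by (rule R_shift2) simp_all
  have h3: "NT (R [1,1,2,2,2] (n+4)) = NT (R [0,0,1,1,1] (n+3))" by (rule R_shift2) simp_all
  have h4: "NT (R [0,0,1,1,1] (n+3)) = NT (R [3,3,1,1,1] (n+3))" by (simp add: zstep fz_def)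
  have h5: "NT (R [3,3,1,1,1] (n+3)) = NT (R [2,2,0,0,0] (n+2))" by (rule R_shift2) simp_all
  show ?thesis using h0 h1 h2 h3 h4 h5 by simp
qed

lemma rR: "NT (R [2,0,0,0,2] (n+5)) = NT (R [2,0,0,0,2] (n+2)) + NT (R [1,0,0,0,1] (n+4))"
proof -
  have h0: "NT (R [2,0,0,0,2] (n+5)) = NT (R [2,3,3,3,2] (n+5)) + NT (R [2,1,1,1,2] (n+5))" by (simp add: zstep fz_def)
  have h1: "NT (R [2,3,3,3,2] (n+5)) = NT (R [1,2,2,2,1] (n+4))" by (rule R_shift2) simp_all
  have h2: "NT (R [2,1,1,1,2] (n+5)) = NT (R [1,0,0,0,1] (n+4))" by (rule R_shift2) simp_all
  have h3: "NT (R [1,2,2,2,1] (n+4)) = NT (R [0,1,1,1,0] (n+3))" by (rule R_shift2) simp_all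
  have h4: "NT (R [0,1,1,1,0] (n+3)) = NT (R [3,1,1,1,3] (n+3))" by (simp add: zstep fz_def)
  have h5: "NT (R [3,1,1,1,3] (n+3)) = NT (R [2,0,0,0,2] (n+2))" by (rule R_shift2) simp_all
  show ?thesis using h0 h1 h2 h3 h4 h5 by simp
qed

lemma rS: "NT (R [0,0,0,2,2] (n+5)) = NT (R [0,0,0,2,2] (n+2)) + NT (R [0,0,0,1,1] (n+4))"
proof -
  have h0: "NT (R [0,0,0,2,2] (n+5)) = NT (R [3,3,3,2,2] (n+5)) + NT (R [1,1,1,2,2] (n+5))" by (simp add: zstep fz_def)
  have h1: "NT (R [3,3,3,2,2] (n+5)) = NT (R [2,2,2,1,1] (n+4))" by (rule R_shift2) simp_all
  have h2: "NT (R [1,1,1,2,2] (n+5)) = NT (R [0,0,0,1,1] (n+4))" by (rule R_shift2) simp_all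
  have h3: "NT (R [2,2,2,1,1] (n+4)) = NT (R [1,1,1,0,0] (n+3))" by (rule R_shift2) simp_all
  have h4: "NT (R [1,1,1,0,0] (n+3)) = NT (R [1,1,1,3,3] (n+3))" by (simp add: zstep fz_def)
  have h5: "NT (R [1,1,1,3,3] (n+3)) = NT (R [0,0,0,2,2] (n+2))" by (rule R_shift2) simp_all
  show ?thesis using h0 h1 h2 h3 h4 h5 by simp
qed

lemma ry: "NT (R [1,1,0,0,0] (n+4)) = NT (R [1,1,0,0,0] (n+1)) + NT (R [0,0,0,0,0] (n+3))"
proof -
  have h0: "NT (R [1,1,0,0,0] (n+4)) = NT (R [1,1,3,3,3] (n+4)) + NT (R [1,1,1,1,1] (n+4))" by (simp add: zstep fz_def)
  have h1: "NT (R [1,1,3,3,3] (n+4)) = NT (R [0,0,2,2,2] (n+3))" by (rule R_shift2) simp_all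
  have h2: "NT (R [1,1,1,1,1] (n+4)) = NT (R [0,0,0,0,0] (n+3))" by (rule R_shift2) simp_all
  have h3: "NT (R [0,0,2,2,2] (n+3)) = NT (R [3,3,2,2,2] (n+3))" by (simp add: zstep fz_def)
  have h4: "NT (R [3,3,2,2,2] (n+3)) = NT (R [2,2,1,1,1] (n+2))" by (rule R_shift2) simp_all
  have h5: "NT (R [2,2,1,1,1] (n+2)) = NT (R [1,1,0,0,0] (n+1))" by (rule R_shift2) simp_all
  show ?thesis using h0 h1 h2 h3 h4 h5 by simp
qed

lemma rv: "NT (R [1,0,0,0,1] (n+4)) = NT (R [1,0,0,0,1] (n+1)) + NT (R [0,0,0,0,0] (n+3))"
proof -
  have h0: "NT (R [1,0,0,0,1] (n+4)) = NT (R [1,3,3,3,1] (n+4)) + NT (R [1,1,1,1,1] (n+4))" by (simp add: zstep fz_def)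
  have h1: "NT (R [1,3,3,3,1] (n+4)) = NT (R [0,2,2,2,0] (n+3))" by (rule R_shift2) simp_all
  have h2: "NT (R [1,1,1,1,1] (n+4)) = NT (R [0,0,0,0,0] (n+3))" by (rule R_shift2) simp_all
  have h3: "NT (R [0,2,2,2,0] (n+3)) = NT (R [3,2,2,2,3] (n+3))" by (simp add: zstep fz_def)
  have h4: "NT (R [3,2,2,2,3] (n+3)) = NT (R [2,1,1,1,2] (n+2))" by (rule R_shift2) simp_all
  have h5: "NT (R [2,1,1,1,2] (n+2)) = NT (R [1,0,0,0,1] (n+1))" by (rule R_shift2) simp_all
  show ?thesis using h0 h1 h2 h3 h4 h5 by simp
qed

lemma ru: "NT (R [0,0,0,1,1] (n+4)) = NT (R [0,0,0,1,1] (n+1)) + NT (R [0,0,0,0,0] (n+3))"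
proof -
  have h0: "NT (R [0,0,0,1,1] (n+4)) = NT (R [3,3,3,1,1] (n+4)) + NT (R [1,1,1,1,1] (n+4))" by (simp add: zstep fz_def)
  have h1: "NT (R [3,3,3,1,1] (n+4)) = NT (R [2,2,2,0,0] (n+3))" by (rule R_shift2) simp_all
  have h2: "NT (R [1,1,1,1,1] (n+4)) = NT (R [0,0,0,0,0] (n+3))" by (rule R_shift2) simp_all
  have h3: "NT (R [2,2,2,0,0] (n+3)) = NT (R [2,2,2,3,3] (n+3))" by (simp add: zstep fz_def)
  have h4: "NT (R [2,2,2,3,3] (n+3)) = NT (R [1,1,1,2,2] (n+2))" by (rule R_shift2) simp_all
  have h5: "NT (R [1,1,1,2,2] (n+2)) = NT (R [0,0,0,1,1] (n+1))" by (rule R_shift2) simp_all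
  show ?thesis using h0 h1 h2 h3 h4 h5 by simp
qed

lemma base_Q: "NT (R [2,2,0,0,0] 2) = 1"
proof -
  have h0: "NT (R [2,2,0,0,0] 2) = NT (R [2,2,1,1,1] 2)" by (simp add: zstep fz_def)
  have h1: "NT (R [2,2,1,1,1] 2) = NT (R [1,1,0,0,0] 1)" by (rule R_shift2) simp_all
  have h2: "NT (R [1,1,0,0,0] 1) = NT (R [1,1,1,1,1] 1)" by (simp add: zstep fz_def)
  have h3: "NT (R [1,1,1,1,1] 1) = NT (R [0,0,0,0,0] 0)" by (rule R_shift2) simp_all
  have h4: "NT (R [0,0,0,0,0] 0) = 1" by (rule R0)
  show ?thesis using h0 h1 h2 h3 h4 by simp
qed

lemma base_R: "NT (R [2,0,0,0,2] 2) = 1"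
proof -
  have h0: "NT (R [2,0,0,0,2] 2) = NT (R [2,1,1,1,2] 2)" by (simp add: zstep fz_def)
  have h1: "NT (R [2,1,1,1,2] 2) = NT (R [1,0,0,0,1] 1)" by (rule R_shift2) simp_all
  have h2: "NT (R [1,0,0,0,1] 1) = NT (R [1,1,1,1,1] 1)" by (simp add: zstep fz_def)
  have h3: "NT (R [1,1,1,1,1] 1) = NT (R [0,0,0,0,0] 0)" by (rule R_shift2) simp_all
  have h4: "NT (R [0,0,0,0,0] 0) = 1" by (rule R0)
  show ?thesis using h0 h1 h2 h3 h4 by simp
qed

lemma base_S: "NT (R [0,0,0,2,2] 2) = 1"
proof -
  have h0: "NT (R [0,0,0,2,2] 2) = NT (R [1,1,1,2,2] 2)" by (simp add: zstep fz_def)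
  have h1: "NT (R [1,1,1,2,2] 2) = NT (R [0,0,0,1,1] 1)" by (rule R_shift2) simp_all
  have h2: "NT (R [0,0,0,1,1] 1) = NT (R [1,1,1,1,1] 1)" by (simp add: zstep fz_def)
  have h3: "NT (R [1,1,1,1,1] 1) = NT (R [0,0,0,0,0] 0)" by (rule R_shift2) simp_all
  have h4: "NT (R [0,0,0,0,0] 0) = 1" by (rule R0)
  show ?thesis using h0 h1 h2 h3 h4 by simp
qed

lemma base_y: "NT (R [1,1,0,0,0] 1) = 1"
proof -
  have h0: "NT (R [1,1,0,0,0] 1) = NT (R [1,1,1,1,1] 1)" by (simp add: zstep fz_def)
  have h1: "NT (R [1,1,1,1,1] 1) = NT (R [0,0,0,0,0] 0)" by (rule R_shift2) simp_all
  have h2: "NT (R [0,0,0,0,0] 0) = 1" by (rule R0)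
  show ?thesis using h0 h1 h2 by simp
qed

lemma base_v: "NT (R [1,0,0,0,1] 1) = 1"
proof -
  have h0: "NT (R [1,0,0,0,1] 1) = NT (R [1,1,1,1,1] 1)" by (simp add: zstep fz_def)
  have h1: "NT (R [1,1,1,1,1] 1) = NT (R [0,0,0,0,0] 0)" by (rule R_shift2) simp_all
  have h2: "NT (R [0,0,0,0,0] 0) = 1" by (rule R0)
  show ?thesis using h0 h1 h2 by simp
qed

lemma base_u: "NT (R [0,0,0,1,1] 1) = 1"
proof -
  have h0: "NT (R [0,0,0,1,1] 1) = NT (R [1,1,1,1,1] 1)" by (simp add: zstep fz_def)
  have h1: "NT (R [1,1,1,1,1] 1) = NT (R [0,0,0,0,0] 0)" by (rule R_shift2) simp_all
  have h2: "NT (R [0,0,0,0,0] 0) = 1" by (rule R0)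
  show ?thesis using h0 h1 h2 by simp
qed

lemma mulD_nth:
  fixes a :: "rat fps"
  shows "fps_nth (a * (1 - 6 * fps_X ^ 5 + 3 * fps_X ^ 10 - fps_X ^ 15)) N =
    fps_nth a N - 6 * (if N < 5 then 0 else fps_nth a (N - 5)) + 3 * (if N < 10 then 0 else fps_nth a (N - 10))
      - (if N < 15 then 0 else fps_nth a (N - 15))"
proof -
  have e: "a * (1 - 6 * fps_X ^ 5 + 3 * fps_X ^ 10 - fps_X ^ 15) =
     a - fps_const 6 * (a * fps_X ^ 5) + fps_const 3 * (a * fps_X ^ 10) - a * fps_X ^ 15"
    by (simp add: algebra_simps numeral_fps_const)
  show ?thesis unfolding e by (simp add: fps_X_power_mult_right_nth)
qed

lemma rhs_nth:
  "fps_nth ((1 - fps_X ^ 5)\<^sup>2 :: rat fps) N = (if N = 0 then 1 else 0) - 2 * (if N = 5 then 1 else 0) + (if N = 10 then 1 else 0)"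
proof -
  have e: "((1 - fps_X ^ 5)\<^sup>2 :: rat fps) = 1 - fps_const 2 * fps_X ^ 5 + fps_X ^ 10"
    by (simp add: power2_eq_square algebra_simps numeral_fps_const power_add[symmetric])
  show ?thesis unfolding e by simp
qed


definition zz :: "nat \<Rightarrow> nat" where "zz n = NT (R [0,0,0,0,0] n)"
definition AA :: "nat \<Rightarrow> nat" where
  "AA n = NT (R [2,2,0,0,0] n) + NT (R [2,0,0,0,2] n) + NT (R [0,0,0,2,2] n)"
definition YY :: "nat \<Rightarrow> nat" where
  "YY n = NT (R [1,1,0,0,0] n) + NT (R [1,0,0,0,1] n) + NT (R [0,0,0,1,1] n)"

lemma rZ': "zz (n+3) = zz n + AA (n+2)"
  using rZ[of n] by (simp add: zz_def AA_def)
lemma rA': "AA (n+5) = AA (n+2) + YY (n+4)"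
  using rQ[of n] rR[of n] rS[of n] by (simp add: AA_def YY_def)
lemma rY': "YY (n+4) = YY (n+1) + 3 * zz (n+3)"
  using ry[of n] rv[of n] ru[of n] by (simp add: zz_def YY_def)

lemma rZ'': "m = n+3 \<Longrightarrow> p = n+2 \<Longrightarrow> zz m = zz n + AA p" using rZ' by simp
lemma rA'': "m = n+5 \<Longrightarrow> p = n+2 \<Longrightarrow> q = n+4 \<Longrightarrow> AA m = AA p + YY q" using rA' by simp
lemma rY'': "m = n+4 \<Longrightarrow> p = n+1 \<Longrightarrow> q = n+3 \<Longrightarrow> YY m = YY p + 3 * zz q" using rY' by simp

lemma zz_rec: "zz (m+12) + 3 * zz (m+6) = 6 * zz (m+9) + zz (m+3)"
proof -
  have 1: "zz (m+12) = zz (m+9) + AA (m+11)" using rZ'[of "m+9"] by (simp add: ac_simps)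
  have 2: "zz (m+9) = zz (m+6) + AA (m+8)" using rZ'[of "m+6"] by (simp add: ac_simps)
  have 3: "zz (m+6) = zz (m+3) + AA (m+5)" using rZ'[of "m+3"] by (simp add: ac_simps)
  have 4: "AA (m+11) = AA (m+8) + YY (m+10)" using rA'[of "m+6"] by (simp add: ac_simps)
  have 5: "AA (m+8) = AA (m+5) + YY (m+7)" using rA'[of "m+3"] by (simp add: ac_simps)
  have 6: "YY (m+10) = YY (m+7) + 3 * zz (m+9)" using rY'[of "m+6"] by (simp add: ac_simps)
  show ?thesis using 1 2 3 4 5 6 by linarith
qed

lemma zz_vals: "zz 0 = 1" "zz 3 = 4" "zz 6 = 22" "zz 9 = 121"
proof -
  have z0: "zz 0 = 1" by (simp add: zz_def R0)
  have a2: "AA 2 = 3" using base_Q base_R base_S by (simp add: AA_def)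
  have y1: "YY 1 = 3" using base_y base_v base_u by (simp add: YY_def)
  have "zz 3 = zz 0 + AA 2" by (rule rZ'') simp_all
  then have z3: "zz 3 = 4" using z0 a2 by simp
  have "YY 4 = YY 1 + 3 * zz 3" by (rule rY'') simp_all
  then have y4: "YY 4 = 15" using y1 z3 by simp
  have "AA 5 = AA 2 + YY 4" by (rule rA'') simp_all
  then have a5: "AA 5 = 18" using a2 y4 by simp
  have "zz 6 = zz 3 + AA 5" by (rule rZ'') simp_all
  then have z6: "zz 6 = 22" using z3 a5 by simp
  have "YY 7 = YY 4 + 3 * zz 6" by (rule rY'') simp_all
  then have y7: "YY 7 = 81" using y4 z6 by simp
  have "AA 8 = AA 5 + YY 7" by (rule rA'') simp_all
  then have a8: "AA 8 = 99" using a5 y7 by simp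
  have "zz 9 = zz 6 + AA 8" by (rule rZ'') simp_all
  then have z9: "zz 9 = 121" using z6 a8 by simp
  show "zz 0 = 1" "zz 3 = 4" "zz 6 = 22" "zz 9 = 121" using z0 z3 z6 z9 by auto
qed

lemma tile_finite: "is_tile 1 3 t \<Longrightarrow> finite t"
  by (auto simp: is_tile_def block_def)

lemma card_tiling:
  assumes "tiling S T" "finite S"
  shows "card S = 3 * card T"
proof -
  have fT: "finite T"
  proof -
    have "T \<subseteq> Pow S" using assms(1) unfolding tiling_def by blast
    then show ?thesis using assms(2) by (meson finite_Pow_iff finite_subset)
  qed
  have pw: "pairwise disjnt T" using assms(1) unfolding tiling_def pairwise_def disjnt_def by blast
  have fm: "\<And>A. A \<in> T \<Longrightarrow> finite A" using assms(1) tile_finite unfolding tiling_def by blast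
  have U: "\<Union>T = S" using assms(1) unfolding tiling_def by blast
  have "card S = sum card T" using card_Union_disjoint[OF pw fm] U by simp
  also have "\<dots> = sum (\<lambda>_. 3) T"
    by (rule sum.cong[OF refl]) (use assms(1) tile_card in \<open>auto simp: tiling_def\<close>)
  also have "\<dots> = 3 * card T" by simp
  finally show ?thesis .
qed

lemma R_rect: "R [0,0,0,0,0] n = rect 5 n"
proof -
  have "[0,0,0,0,0] = replicate 5 (0::nat)" by (simp add: numeral_eq_Suc)
  then show ?thesis by (auto simp: R_def rect_def)
qed

lemma T13_eq: "T13_5 N = (if 5 dvd N then zz (3 * (N div 5)) else 0)"
proof (cases "5 dvd N")
  case False
  then have "\<not> 5 dvd 3 * N" by presburger
  then show ?thesis using False by (simp add: T13_5_def)
next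
  case True
  then obtain k where k: "N = 5 * k" by blast
  have d: "5 dvd 3 * N" using True by simp
  have n: "3 * N div 5 = 3 * k" using k by simp
  have n2: "N div 5 = k" using k by simp
  have "{\<T>. is_tiling 5 (3 * k) 1 3 \<T> \<and> card \<T> = N} = {\<T>. tiling (R [0,0,0,0,0] (3 * k)) \<T>}"
  proof -
    have it: "is_tiling 5 (3*k) 1 3 T \<longleftrightarrow> tiling (R [0,0,0,0,0] (3 * k)) T" for T
      unfolding is_tiling_def tiling_def R_rect by simp
    have c: "card T = N" if "tiling (R [0,0,0,0,0] (3 * k)) T" for T
    proof -
      have "card (R [0,0,0,0,0] (3 * k)) = 3 * card T" using card_tiling[OF that finite_R] .
      moreover have "card (R [0,0,0,0,0] (3 * k)) = 15 * k"
        unfolding R_rect by (simp add: rect_def card_cartesian_product)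
      ultimately show ?thesis using k by simp
    qed
    show ?thesis using it c by blast
  qed
  then show ?thesis using True d n n2 by (simp add: T13_5_def zz_def NT_def)
qed

definition bb :: "nat \<Rightarrow> rat" where "bb k = of_nat (zz (3 * k))"

lemma a_nth: "r < 5 \<Longrightarrow> of_nat (T13_5 (5 * k + r)) = (if r = 0 then bb k else 0)"
proof -
  assume r: "r < 5"
  have "5 dvd (5 * k + r) \<longleftrightarrow> r = 0" using r by presburger
  then show ?thesis by (simp add: T13_eq bb_def)
qed

lemma bb_rec: "bb (j+3) - 6 * bb (j+2) + 3 * bb (j+1) - bb j = 0"
proof (cases j)
  case 0
  then show ?thesis using zz_vals by (simp add: bb_def)
next
  case (Suc i)
  have "zz (3*i+12) + 3 * zz (3*i+6) = 6 * zz (3*i+9) + zz (3*i+3)" by (rule zz_rec)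
  then have "(of_nat (zz (3*i+12)) :: rat) + 3 * of_nat (zz (3*i+6)) = 6 * of_nat (zz (3*i+9)) + of_nat (zz (3*i+3))"
    by (metis (mono_tags, lifting) of_nat_add of_nat_mult of_nat_numeral)
  moreover have "bb (j+3) = of_nat (zz (3*i+12))" "bb (j+2) = of_nat (zz (3*i+9))"
     "bb (j+1) = of_nat (zz (3*i+6))" "bb j = of_nat (zz (3*i+3))"
    unfolding bb_def using Suc by (simp_all add: algebra_simps)
  ultimately show ?thesis by linarith
qed

theorem mainTheorem2:
  shows "Abs_fps (\<lambda>N. of_nat (T13_5 N) :: rat) =
    (1 - fps_X ^ 5)\<^sup>2 / (1 - 6 * fps_X ^ 5 + 3 * fps_X ^ 10 - fps_X ^ 15)"
proof -
  define a where "a = Abs_fps (\<lambda>N. of_nat (T13_5 N) :: rat)"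
  define D :: "rat fps" where "D = 1 - 6 * fps_X ^ 5 + 3 * fps_X ^ 10 - fps_X ^ 15"
  have an: "fps_nth a (5 * k + r) = (if r = 0 then bb k else 0)" if "r < 5" for k r
    using a_nth[OF that] by (simp add: a_def)
  have key: "a * D = (1 - fps_X ^ 5)\<^sup>2"
  proof (rule fps_ext)
    fix N
    obtain k r :: nat where N: "N = 5 * k + r" and r: "r < 5"
      using div_mod_decomp[of N 5] mod_less_divisor[of 5 N] by (metis mult.commute zero_less_numeral)
    show "fps_nth (a * D) N = fps_nth ((1 - fps_X ^ 5)\<^sup>2) N"
      unfolding D_def mulD_nth rhs_nth
    proof (cases "k \<ge> 3")
      case True
      then obtain j where j: "k = j + 3" by (metis le_add_diff_inverse2)
      have e: "N - 5 = 5 * (j+2) + r" "N - 10 = 5 * (j+1) + r" "N - 15 = 5 * j + r" "N = 5 * (j+3) + r"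
        using N j by simp_all
      have "\<not> N < 15" "N \<noteq> 0" "N \<noteq> 5" "N \<noteq> 10" using N j by simp_all
      show "fps_nth a N - 6 * (if N < 5 then 0 else fps_nth a (N - 5)) + 3 * (if N < 10 then 0 else fps_nth a (N - 10)) -
    (if N < 15 then 0 else fps_nth a (N - 15)) =
    (if N = 0 then 1 else 0) - 2 * (if N = 5 then 1 else 0) + (if N = 10 then 1 else 0)"
      proof -
        have "fps_nth a N = (if r=0 then bb (j+3) else 0)" using an[OF r, of "j+3"] e(4) by simp
        moreover have "fps_nth a (N-5) = (if r=0 then bb (j+2) else 0)" using an[OF r, of "j+2"] e(1) by simp
        moreover have "fps_nth a (N-10) = (if r=0 then bb (j+1) else 0)" using an[OF r, of "j+1"] e(2) by simp
        moreover have "fps_nth a (N-15) = (if r=0 then bb j else 0)" using an[OF r, of "j"] e(3) by simp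
        ultimately show ?thesis using bb_rec[of j] \<open>\<not> N < 15\<close> \<open>N \<noteq> 0\<close> \<open>N \<noteq> 5\<close> \<open>N \<noteq> 10\<close> by simp
      qed
    next
      case False
      then have "k = 0 \<or> k = 1 \<or> k = 2" by linarith
      moreover have "bb 0 = 1" "bb 1 = 4" "bb 2 = 22" using zz_vals by (simp_all add: bb_def)
      ultimately show "fps_nth a N - 6 * (if N < 5 then 0 else fps_nth a (N - 5)) + 3 * (if N < 10 then 0 else fps_nth a (N - 10)) -
    (if N < 15 then 0 else fps_nth a (N - 15)) =
    (if N = 0 then 1 else 0) - 2 * (if N = 5 then 1 else 0) + (if N = 10 then 1 else 0)"
        using an[OF r] an[OF r, of 0] an[OF r, of 1] an[OF r, of 2] r N by auto
    qed
  qed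
  have D0: "D \<noteq> 0"
  proof
    assume "D = 0"
    then have "fps_nth D 0 = 0" by simp
    then show False by (simp add: D_def)
  qed
  have "a = (a * D) / D" using fps_divide_times_eq[OF D0] by simp
  then show ?thesis unfolding key by (simp add: a_def D_def)
qed

end
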